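(* Let $\mathcal{H}$ be a complex Hilbert space, let $T\in\mathbb{B}(\mathcal{H})$ and let $N(\cdot)$ be an algebra norm on $\mathbb{B}(\mathcal{H})$. Then $$\frac{N\big(TT^* + T^*T\big)}{4} + \frac{1}{2}\sup_{\varphi \in \mathbb{R}}\Big|N^2\big({\rm Re}(e^{i\varphi}T)\big) - N^2\big({\rm Im}(e^{i\varphi}T)\big)\Big| \leq w^2_{N}(T).$$
   Context: $\mathbb{B}(\mathcal{H})$ is the algebra of bounded linear operators on $\mathcal{H}$. A norm $N(\cdot)$ on $\mathbb{B}(\mathcal{H})$ is an algebra norm if $N(TS)\le N(T)N(S)$ for all $T,S\in\mathbb{B}(\mathcal{H})$. For $A\in\mathbb{B}(\mathcal{H})$, ${\rm Re}(A)=\frac{A+A^*}{2}$ and ${\rm Im}(A)=\frac{A-A^*}{2i}$. The generalized numerical radius is $w_N(T)=\sup_{\theta\in\mathbb{R}} N\big({\rm Re}(e^{i\theta}T)\big)$. *)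

theory Defs
  imports "HOL-Analysis.Analysis"
begin

class complex_vector = real_vector +
  fixes scaleC :: "complex \<Rightarrow> 'a \<Rightarrow> 'a"
  assumes scaleC_add_right: "scaleC a (x + y) = scaleC a x + scaleC a y"
    and scaleC_add_left: "scaleC (a + b) x = scaleC a x + scaleC b x"
    and scaleC_scaleC: "scaleC a (scaleC b x) = scaleC (a * b) x"
    and scaleC_one: "scaleC 1 x = x"
    and scaleR_scaleC: "scaleR r x = scaleC (complex_of_real r) x"

class complex_inner = complex_vector + real_normed_vector +
  fixes cinner :: "'a \<Rightarrow> 'a \<Rightarrow> complex"
  assumes cinner_conj: "cinner x y = cnj (cinner y x)"
    and cinner_add_right: "cinner x (y + z) = cinner x y + cinner x z"
    and cinner_scaleC_right: "cinner x (scaleC c y) = c * cinner x y"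
    and cinner_nonneg: "0 \<le> Re (cinner x x)"
    and cinner_eq_zero_iff: "cinner x x = 0 \<longleftrightarrow> x = 0"
    and norm_cinner: "norm x = sqrt (Re (cinner x x))"

class chilbert_space = complex_inner + complete_space

definition bounded_clinear :: "('a::complex_inner \<Rightarrow> 'b::complex_inner) \<Rightarrow> bool" where
  "bounded_clinear f \<longleftrightarrow> bounded_linear f \<and> (\<forall>c x. f (scaleC c x) = scaleC c (f x))"

definition BH :: "('a::complex_inner \<Rightarrow> 'a) set" where
  "BH = {T. bounded_clinear T}"

definition cadjoint :: "('a::complex_inner \<Rightarrow> 'a) \<Rightarrow> ('a \<Rightarrow> 'a)" where
  "cadjoint T = (THE S. \<forall>x y. cinner (T x) y = cinner x (S y))"

definition op_scale :: "complex \<Rightarrow> ('a::complex_inner \<Rightarrow> 'a) \<Rightarrow> ('a \<Rightarrow> 'a)" where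
  "op_scale c T = (\<lambda>x. scaleC c (T x))"

definition op_Re :: "('a::complex_inner \<Rightarrow> 'a) \<Rightarrow> ('a \<Rightarrow> 'a)" where
  "op_Re A = (\<lambda>x. scaleC (1/2) (A x + cadjoint A x))"

definition op_Im :: "('a::complex_inner \<Rightarrow> 'a) \<Rightarrow> ('a \<Rightarrow> 'a)" where
  "op_Im A = (\<lambda>x. scaleC (1 / (2 * \<i>)) (A x - cadjoint A x))"

definition algebra_norm :: "(('a::complex_inner \<Rightarrow> 'a) \<Rightarrow> real) \<Rightarrow> bool" where
  "algebra_norm N \<longleftrightarrow>
     (\<forall>T\<in>BH. 0 \<le> N T) \<and>
     (\<forall>T\<in>BH. N T = 0 \<longleftrightarrow> T = (\<lambda>x. 0)) \<and>
     (\<forall>T\<in>BH. \<forall>c. N (op_scale c T) = cmod c * N T) \<and>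
     (\<forall>T\<in>BH. \<forall>S\<in>BH. N (\<lambda>x. T x + S x) \<le> N T + N S) \<and>
     (\<forall>T\<in>BH. \<forall>S\<in>BH. N (T \<circ> S) \<le> N T * N S)"

definition gen_numrad :: "(('a::complex_inner \<Rightarrow> 'a) \<Rightarrow> real) \<Rightarrow> ('a \<Rightarrow> 'a) \<Rightarrow> real" where
  "gen_numrad N T = (SUP \<theta>::real. N (op_Re (op_scale (exp (\<i> * complex_of_real \<theta>)) T)))"

end

theory Submission
  imports Defs
begin


lemma scaleC_zero_right[simp]: "scaleC a (0::'a::complex_vector) = 0"
proof -
  have "scaleC a (0::'a) = scaleC a (0 + 0)" by simp
  also have "\<dots> = scaleC a 0 + scaleC a 0" by (rule scaleC_add_right)
  finally show ?thesis by simp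
qed

lemma scaleC_minus_right[simp]: "scaleC a (- x::'a::complex_vector) = - scaleC a x"
proof -
  have "scaleC a x + scaleC a (-x) = scaleC a (x + - x)" by (rule scaleC_add_right[symmetric])
  also have "\<dots> = 0" by simp
  finally show ?thesis by (simp add: eq_neg_iff_add_eq_0 add.commute)
qed

lemma scaleC_diff_right: "scaleC a (x - y::'a::complex_vector) = scaleC a x - scaleC a y"
  by (simp only: diff_conv_add_uminus scaleC_add_right scaleC_minus_right)

lemma scaleC_of_real: "scaleC (complex_of_real r) (x::'a::complex_vector) = scaleR r x"
  by (rule scaleR_scaleC[symmetric])

lemma scaleC_zero_left[simp]: "scaleC 0 (x::'a::complex_vector) = 0"
proof -
  have "scaleC 0 x = scaleC (complex_of_real 0) x" by (simp only: of_real_0)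
  also have "\<dots> = scaleR 0 x" by (rule scaleC_of_real)
  finally show ?thesis by (simp only: scale_zero_left)
qed

lemma scaleC_minus_left: "scaleC (- a) (x::'a::complex_vector) = - scaleC a x"
proof -
  have "scaleC a x + scaleC (-a) x = scaleC (a + - a) x" by (rule scaleC_add_left[symmetric])
  also have "\<dots> = 0" by simp
  finally show ?thesis by (simp add: eq_neg_iff_add_eq_0 add.commute)
qed

lemma scaleC_diff_left: "scaleC (a - b) (x::'a::complex_vector) = scaleC a x - scaleC b x"
  by (simp only: diff_conv_add_uminus scaleC_add_left scaleC_minus_left)

lemma scaleC_scaleR_comm: "scaleC c (scaleR r x) = scaleR r (scaleC c (x::'a::complex_vector))"
proof -
  have "scaleC c (scaleR r x) = scaleC c (scaleC (complex_of_real r) x)" by (simp only: scaleR_scaleC)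
  also have "\<dots> = scaleC (complex_of_real r) (scaleC c x)" by (simp only: scaleC_scaleC mult.commute)
  also have "\<dots> = scaleR r (scaleC c x)" by (simp only: scaleR_scaleC)
  finally show ?thesis .
qed

lemma cinner_add_left: "cinner (x + y) (z::'a::complex_inner) = cinner x z + cinner y z"
proof -
  have "cinner (x + y) z = cnj (cinner z (x + y))" by (rule cinner_conj)
  also have "\<dots> = cnj (cinner z x) + cnj (cinner z y)" by (simp add: cinner_add_right)
  also have "\<dots> = cinner x z + cinner y z" by (simp add: cinner_conj[of x z] cinner_conj[of y z])
  finally show ?thesis .
qed

lemma cinner_scaleC_left: "cinner (scaleC c x) (y::'a::complex_inner) = cnj c * cinner x y"
proof -
  have "cinner (scaleC c x) y = cnj (cinner y (scaleC c x))" by (rule cinner_conj)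
  also have "\<dots> = cnj c * cnj (cinner y x)" by (simp add: cinner_scaleC_right)
  also have "\<dots> = cnj c * cinner x y" by (simp add: cinner_conj[of x y])
  finally show ?thesis .
qed

lemma cinner_zero_right[simp]: "cinner x (0::'a::complex_inner) = 0"
proof -
  have "cinner x (0::'a) = cinner x (0 + 0)" by simp
  also have "\<dots> = cinner x 0 + cinner x 0" by (rule cinner_add_right)
  finally show ?thesis by simp
qed

lemma cinner_zero_left[simp]: "cinner (0::'a::complex_inner) x = 0"
  using cinner_conj[of 0 x] by simp

lemma cinner_minus_right: "cinner x (- y::'a::complex_inner) = - cinner x y"
proof -
  have "cinner x y + cinner x (- y) = cinner x (y + - y)" by (rule cinner_add_right[symmetric])
  also have "\<dots> = 0" by simp
  finally show ?thesis by (simp add: eq_neg_iff_add_eq_0 add.commute)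
qed

lemma cinner_minus_left: "cinner (- x) (y::'a::complex_inner) = - cinner x y"
  using cinner_conj[of "-x" y] cinner_conj[of x y] by (simp add: cinner_minus_right)

lemma cinner_diff_right: "cinner x (y - z::'a::complex_inner) = cinner x y - cinner x z"
  by (simp only: diff_conv_add_uminus cinner_add_right cinner_minus_right)

lemma cinner_diff_left: "cinner (x - y) (z::'a::complex_inner) = cinner x z - cinner y z"
  by (simp only: diff_conv_add_uminus cinner_add_left cinner_minus_left)

lemma norm_sq_cinner: "(norm x)^2 = Re (cinner x (x::'a::complex_inner))"
  by (simp add: norm_cinner cinner_nonneg)

lemma cinner_self: "cinner x (x::'a::complex_inner) = complex_of_real ((norm x)^2)"
proof -
  have "cinner x x = cnj (cinner x x)" by (rule cinner_conj)
  then have "Im (cinner x x) = 0" by (metis complex_cnj_cancel_iff Reals_cnj_iff complex_is_Real_iff)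
  then show ?thesis by (simp add: norm_sq_cinner complex_eq_iff)
qed



lemma cnorm2: "c * cnj c = (complex_of_real (cmod c))^2"
  by (metis complex_norm_square of_real_power)

lemma norm_scaleC: "norm (scaleC c (x::'a::complex_inner)) = cmod c * norm x"
proof -
  have "(norm (scaleC c x))^2 = (cmod c * norm x)^2"
  proof -
    have "complex_of_real ((norm (scaleC c x))^2) = cinner (scaleC c x) (scaleC c x)"
      by (simp add: cinner_self)
    also have "\<dots> = (cnj c * c) * cinner x x" by (simp add: cinner_scaleC_left cinner_scaleC_right)
    also have "\<dots> = complex_of_real ((cmod c * norm x)^2)"
      by (simp add: cinner_self cnorm2 power_mult_distrib mult.commute)
    finally show ?thesis using of_real_eq_iff by blast
  qed
  then show ?thesis by (simp add: power2_eq_iff_nonneg)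
qed

lemma cauchy_schwarz: "cmod (cinner x (y::'a::complex_inner)) \<le> norm x * norm y"
proof (cases "y = 0")
  case True then show ?thesis by simp
next
  case False
  define a where "a = cinner y x"
  define n where "n = (norm y)^2"
  have n0: "n > 0" using False by (simp add: n_def)
  define z where "z = x - scaleC (a / complex_of_real n) y"
  have yy: "cinner y y = complex_of_real n" by (simp add: cinner_self n_def)
  have xy: "cinner x y = cnj a" unfolding a_def by (rule cinner_conj)
  have "cinner z z = cinner x x - (a / n) * cinner x y - cnj (a / n) * cinner y x
        + cnj (a / n) * (a / n) * cinner y y"
    unfolding z_def cinner_diff_left cinner_diff_right cinner_scaleC_left cinner_scaleC_right
    by (simp add: algebra_simps)
  also have "\<dots> = cinner x x - a * cnj a / n"
    using n0 by (simp add: xy yy a_def[symmetric] field_simps)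
  also have "\<dots> = complex_of_real ((norm x)^2 - (cmod a)^2 / n)"
    by (simp add: cinner_self cnorm2)
  finally have "Re (cinner z z) = (norm x)^2 - (cmod a)^2 / n" by simp
  then have "(cmod a)^2 / n \<le> (norm x)^2" using cinner_nonneg[of z] by linarith
  then have "(cmod a)^2 \<le> (norm x * norm y)^2" using n0 by (simp add: n_def field_simps power_mult_distrib)
  then have "cmod a \<le> norm x * norm y" by (simp add: power2_le_iff_abs_le)
  moreover have "cmod (cinner x y) = cmod a" by (simp add: xy)
  ultimately show ?thesis by simp
qed



lemma parallelogram: "(norm (x + y))^2 + (norm (x - y))^2 = 2 * (norm x)^2 + 2 * (norm (y::'a::complex_inner))^2"
proof -
  have "complex_of_real ((norm (x + y))^2 + (norm (x - y))^2) = cinner (x+y) (x+y) + cinner (x-y) (x-y)"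
    by (simp add: cinner_self)
  also have "\<dots> = 2 * cinner x x + 2 * cinner y y"
    by (simp add: cinner_add_left cinner_add_right cinner_diff_left cinner_diff_right algebra_simps)
  also have "\<dots> = complex_of_real (2 * (norm x)^2 + 2 * (norm y)^2)" by (simp add: cinner_self)
  finally show ?thesis using of_real_eq_iff by blast
qed

lemma cinner_ext: "(\<And>x. cinner x u = cinner x v) \<Longrightarrow> u = (v::'a::complex_inner)"
proof -
  assume h: "\<And>x. cinner x u = cinner x v"
  have "cinner (u - v) (u - v) = cinner (u - v) u - cinner (u - v) v" by (rule cinner_diff_right)
  also have "\<dots> = 0" using h[of "u - v"] by simp
  finally have "u - v = 0" by (rule cinner_eq_zero_iff[THEN iffD1])
  then show ?thesis by simp
qed

lemma riesz:
  fixes f :: "'a::chilbert_space \<Rightarrow> complex"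
  assumes add: "\<And>x y. f (x + y) = f x + f y"
    and scal: "\<And>c x. f (scaleC c x) = c * f x"
    and bnd: "\<And>x. cmod (f x) \<le> K * norm x"
  shows "\<exists>y. \<forall>x. f x = cinner y x"
proof (cases "\<forall>x. f x = 0")
  case True then show ?thesis by (intro exI[of _ 0]) simp
next
  case False
  then obtain u where fu: "f u \<noteq> 0" by blast
  have f0: "f 0 = 0" using scal[of 0 0] by simp
  have fdiff: "f (x - y) = f x - f y" for x y using add[of "x - y" y] by simp
  have fR: "f (scaleR r x) = complex_of_real r * f x" for r x
    unfolding scaleR_scaleC by (rule scal)
  define S where "S = {x. f x = 1}"
  define A where "A = (\<lambda>x. (norm x)^2) ` S"
  define D where "D = Inf A"
  have u1: "f (scaleC (1 / f u) u) = 1" using fu by (simp add: scal)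
  have Ane: "A \<noteq> {}" using u1 by (auto simp: A_def S_def)
  have Abdd: "bdd_below A" unfolding A_def by (rule bdd_belowI[of _ 0]) auto
  have lower: "D \<le> (norm x)^2" if "f x = 1" for x
    unfolding D_def using Abdd that by (auto intro!: cInf_lower simp: A_def S_def)
  have "\<exists>x. f x = 1 \<and> (norm x)^2 < D + inverse (real (Suc n))" for n
  proof -
    have "Inf A < D + inverse (real (Suc n))" by (simp add: D_def)
    then obtain a where "a \<in> A" "a < D + inverse (real (Suc n))"
      using cInf_less_iff[OF Ane Abdd] by blast
    then show ?thesis by (auto simp: A_def S_def)
  qed
  then obtain xs where xs1: "\<And>n. f (xs n) = 1"
    and xs2: "\<And>n. (norm (xs n))^2 < D + inverse (real (Suc n))" by metis
  have dist_bound: "(norm (xs m - xs n))^2 < 2 * inverse (real (Suc m)) + 2 * inverse (real (Suc n))" for m n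
  proof -
    have "f (scaleR (1/2) (xs m + xs n)) = 1" by (simp add: fR add xs1)
    then have "D \<le> (norm (scaleR (1/2) (xs m + xs n)))^2" by (rule lower)
    then have "4 * D \<le> (norm (xs m + xs n))^2" by (simp add: power_divide)
    moreover have "(norm (xs m + xs n))^2 + (norm (xs m - xs n))^2 = 2 * (norm (xs m))^2 + 2 * (norm (xs n))^2"
      by (rule parallelogram)
    ultimately show ?thesis using xs2[of m] xs2[of n] by linarith
  qed
  have "Cauchy xs"
  proof (rule CauchyI)
    fix e :: real assume e: "0 < e"
    obtain M :: nat where M: "4 / e^2 < real M" using reals_Archimedean2 by blast
    have "\<forall>m\<ge>M. \<forall>n\<ge>M. norm (xs m - xs n) < e"
    proof (intro allI impI)
      fix m n assume mn: "M \<le> m" "M \<le> n"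
      have im: "inverse (real (Suc m)) \<le> inverse (real (Suc M))" using mn by (simp add: field_simps)
      have in': "inverse (real (Suc n)) \<le> inverse (real (Suc M))" using mn by (simp add: field_simps)
      have "4 * inverse (real (Suc M)) < e^2"
      proof -
        have "4 / e^2 < real (Suc M)" using M by simp
        then have "4 < e^2 * real (Suc M)" using e by (simp add: field_simps)
        then show ?thesis using e by (simp add: field_simps)
      qed
      then have "(norm (xs m - xs n))^2 < e^2" using dist_bound[of m n] im in' by linarith
      then show "norm (xs m - xs n) < e" using e by (simp add: power_less_imp_less_base)
    qed
    then show "\<exists>M. \<forall>m\<ge>M. \<forall>n\<ge>M. norm (xs m - xs n) < e" by blast
  qed
  then obtain x0 where lim: "xs \<longlonglongrightarrow> x0" using Cauchy_convergent_iff convergent_def by blast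
  have limd: "(\<lambda>n. norm (xs n - x0)) \<longlonglongrightarrow> 0"
    using tendsto_norm[OF tendsto_diff[OF lim tendsto_const[of x0]]] by simp
  have fx0: "f x0 = 1"
  proof -
    have "cmod (1 - f x0) \<le> K * norm (xs n - x0)" for n
      using bnd[of "xs n - x0"] by (simp add: fdiff xs1)
    then have "cmod (1 - f x0) \<le> K * 0"
      by (intro LIMSEQ_le_const[OF tendsto_mult[OF tendsto_const limd]]) auto
    then show ?thesis by simp
  qed
  have x0min: "(norm x0)^2 \<le> D"
  proof (rule LIMSEQ_le)
    show "(\<lambda>n. (norm (xs n))^2) \<longlonglongrightarrow> (norm x0)^2" by (intro tendsto_intros lim)
    show "(\<lambda>n. D + inverse (real (Suc n))) \<longlonglongrightarrow> D"
      using tendsto_add[OF tendsto_const LIMSEQ_inverse_real_of_nat, of D] by simp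
    show "\<exists>N. \<forall>n\<ge>N. (norm (xs n))^2 \<le> D + inverse (real (Suc n))" using xs2 less_imp_le by blast
  qed
  have orth: "cinner x0 k = 0" if fk: "f k = 0" for k
  proof -
    define a where "a = cinner x0 k"
    have np: "0 \<le> (norm k)^2" by simp
    have d0: "(norm k)^2 + 1 > 0" using np by linarith
    define s where "s = 1 / ((norm k)^2 + 1)"
    have s0: "s > 0" unfolding s_def using d0 by simp
    have sk: "s * (norm k)^2 < 1" unfolding s_def using d0 by (simp add: field_simps)
    define t where "t = - (complex_of_real s * cnj a)"
    define z where "z = x0 + scaleC t k"
    have "f z = 1" by (simp add: z_def add scal fk fx0)
    then have "D \<le> (norm z)^2" by (rule lower)
    then have le: "(norm x0)^2 \<le> (norm z)^2" using x0min by linarith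
    have kx: "cinner k x0 = cnj a" unfolding a_def by (rule cinner_conj)
    have ex: "cinner z z = cinner x0 x0 + (t * a + cnj t * cnj a + cnj t * t * cinner k k)"
      unfolding z_def cinner_add_left cinner_add_right cinner_scaleC_left cinner_scaleC_right kx a_def[symmetric]
      by (simp add: algebra_simps)
    have idt: "t * a + cnj t * cnj a + cnj t * t * complex_of_real ((norm k)^2)
        = complex_of_real (s * (cmod a)^2 * (s * (norm k)^2 - 2))"
      unfolding t_def cmod_power2 by (simp add: complex_eq_iff algebra_simps power2_eq_square)
    have "complex_of_real ((norm z)^2) = complex_of_real ((norm x0)^2 + s * (cmod a)^2 * (s * (norm k)^2 - 2))"
      using ex idt unfolding cinner_self of_real_add by simp
    then have "(norm z)^2 = (norm x0)^2 + s * (cmod a)^2 * (s * (norm k)^2 - 2)"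
      using of_real_eq_iff by blast
    with le have p: "0 \<le> s * (cmod a)^2 * (s * (norm k)^2 - 2)" by linarith
    have neg: "s * (norm k)^2 - 2 < 0" using sk by linarith
    have "\<not> (s * (cmod a)^2 > 0)"
    proof
      assume "s * (cmod a)^2 > 0"
      then have "s * (cmod a)^2 * (s * (norm k)^2 - 2) < 0" using neg by (rule mult_pos_neg)
      with p show False by linarith
    qed
    then have "(cmod a)^2 \<le> 0" using s0 by (simp add: zero_less_mult_iff)
    then show ?thesis by (simp add: a_def)
  qed
  define q where "q = (norm x0)^2"
  have "x0 \<noteq> 0" using fx0 f0 by auto
  then have q0: "q > 0" by (simp add: q_def)
  show ?thesis
  proof (intro exI allI)
    fix x
    have "f (x - scaleC (f x) x0) = 0" by (simp add: fdiff scal fx0)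
    then have "cinner x0 (x - scaleC (f x) x0) = 0" by (rule orth)
    then have "cinner x0 x = f x * complex_of_real q"
      by (simp add: cinner_diff_right cinner_scaleC_right cinner_self q_def)
    then show "f x = cinner (scaleC (complex_of_real (1/q)) x0) x"
      using q0 by (simp add: cinner_scaleC_left)
  qed
qed



lemma BH_D:
  assumes "T \<in> BH"
  shows "bounded_linear T" and "T (scaleC c x) = scaleC c (T x)"
  using assms by (auto simp: BH_def bounded_clinear_def)

lemma BH_add_app: "T \<in> BH \<Longrightarrow> T (x + y) = T x + T y"
  using BH_D(1) linear_add bounded_linear.linear by blast

lemma BH_diff_app: "T \<in> BH \<Longrightarrow> T (x - y) = T x - T y"
  using BH_add_app[of T "x - y" y] by (simp add: eq_diff_eq)

lemma BH_intro:
  fixes S :: "'a::complex_inner \<Rightarrow> 'a"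
  assumes "\<And>x y. S (x + y) = S x + S y" "\<And>c x. S (scaleC c x) = scaleC c (S x)"
    "\<And>x. norm (S x) \<le> norm x * K"
  shows "S \<in> BH"
proof -
  have r: "S (scaleR r x) = scaleR r (S x)" for r x unfolding scaleR_scaleC by (rule assms(2))
  show ?thesis
  unfolding BH_def bounded_clinear_def
  using assms r by (auto intro!: bounded_linear_intro[where K=K])
qed

lemma scaleC_bl: "bounded_linear (scaleC c :: 'a::complex_inner \<Rightarrow> 'a)"
  by (rule bounded_linear_intro[where K="cmod c"])
     (auto simp: scaleC_add_right scaleC_scaleR_comm norm_scaleC mult.commute)

lemma BH_scale: "T \<in> BH \<Longrightarrow> op_scale c T \<in> BH"
  unfolding BH_def bounded_clinear_def op_scale_def
  using bounded_linear_compose[OF scaleC_bl, of T c]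
  by (auto simp: o_def scaleC_scaleC mult.commute)

lemma BH_addf: "T \<in> BH \<Longrightarrow> S \<in> BH \<Longrightarrow> (\<lambda>x. T x + S x) \<in> BH"
  unfolding BH_def bounded_clinear_def
  by (auto intro: bounded_linear_add simp: scaleC_add_right)

lemma BH_comp: "T \<in> BH \<Longrightarrow> S \<in> BH \<Longrightarrow> T \<circ> S \<in> BH"
  unfolding BH_def bounded_clinear_def o_def
  by (auto intro: bounded_linear_compose)

lemma adjoint_exists:
  fixes T :: "'a::chilbert_space \<Rightarrow> 'a"
  assumes T: "T \<in> BH"
  shows "\<exists>S. \<forall>x y. cinner (T x) y = cinner x (S y)"
proof -
  obtain K where K: "\<And>x. norm (T x) \<le> norm x * K"
    using bounded_linear.bounded[OF BH_D(1)[OF T]] by blast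
  have "\<exists>z. \<forall>x. cinner y (T x) = cinner z x" for y
  proof (rule riesz[where K="norm y * K"])
    show "cinner y (T (x + x')) = cinner y (T x) + cinner y (T x')" for x x'
      by (simp add: BH_add_app[OF T] cinner_add_right)
    show "cinner y (T (scaleC c x)) = c * cinner y (T x)" for c x
      by (simp add: BH_D(2)[OF T] cinner_scaleC_right)
    show "cmod (cinner y (T x)) \<le> norm y * K * norm x" for x
    proof -
      have "cmod (cinner y (T x)) \<le> norm y * norm (T x)" by (rule cauchy_schwarz)
      also have "\<dots> \<le> norm y * (norm x * K)" by (simp add: K mult_left_mono)
      finally show ?thesis by (simp add: mult_ac)
    qed
  qed
  then obtain S where S: "\<And>y x. cinner y (T x) = cinner (S y) x" by metis
  show ?thesis
    by (intro exI[of _ S] allI) (metis S cinner_conj)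
qed

lemma adjoint_unique:
  assumes "\<forall>x y. cinner (T x) y = cinner x (S y)" "\<forall>x y. cinner (T x) y = cinner x (S' y)"
  shows "S = (S'::'a::complex_inner \<Rightarrow> 'a)"
proof
  fix y show "S y = S' y" using assms by (intro cinner_ext) metis
qed

lemma cadjoint_eqI:
  fixes T :: "'a::chilbert_space \<Rightarrow> 'a"
  assumes "\<forall>x y. cinner (T x) y = cinner x (S y)"
  shows "cadjoint T = S"
  unfolding cadjoint_def
  using assms adjoint_unique by (intro the_equality) blast+

lemma cadjoint_char:
  fixes T :: "'a::chilbert_space \<Rightarrow> 'a"
  assumes "T \<in> BH"
  shows "cinner (T x) y = cinner x (cadjoint T y)"
  using adjoint_exists[OF assms] cadjoint_eqI by metis

lemma cadjoint_BH:
  fixes T :: "'a::chilbert_space \<Rightarrow> 'a"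
  assumes T: "T \<in> BH"
  shows "cadjoint T \<in> BH"
proof -
  define S where "S = cadjoint T"
  have ch: "cinner (T x) y = cinner x (S y)" for x y unfolding S_def by (rule cadjoint_char[OF T])
  obtain K where K: "\<And>x. norm (T x) \<le> norm x * K" "K > 0"
    using bounded_linear.pos_bounded[OF BH_D(1)[OF T]] by blast
  show ?thesis unfolding S_def[symmetric]
  proof (rule BH_intro[where K=K])
    show "S (x + y) = S x + S y" for x y
      by (rule cinner_ext) (simp add: ch[symmetric] cinner_add_right)
    show "S (scaleC c x) = scaleC c (S x)" for c x
      by (rule cinner_ext) (simp add: ch[symmetric] cinner_scaleC_right)
    show "norm (S y) \<le> norm y * K" for y
    proof (cases "S y = 0")
      case True then show ?thesis using K by simp
    next
      case False
      have "(norm (S y))^2 = Re (cinner (T (S y)) y)" by (simp add: norm_sq_cinner ch)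
      also have "\<dots> \<le> cmod (cinner (T (S y)) y)" by (rule complex_Re_le_cmod)
      also have "\<dots> \<le> norm (T (S y)) * norm y" by (rule cauchy_schwarz)
      also have "\<dots> \<le> norm (S y) * K * norm y" by (simp add: K mult_right_mono)
      finally have "norm (S y) * norm (S y) \<le> norm (S y) * (K * norm y)"
        by (simp add: power2_eq_square mult_ac)
      then show ?thesis using False by (simp add: mult_ac)
    qed
  qed
qed

lemma cadjoint_scale:
  fixes T :: "'a::chilbert_space \<Rightarrow> 'a"
  assumes T: "T \<in> BH"
  shows "cadjoint (op_scale c T) = op_scale (cnj c) (cadjoint T)"
  by (rule cadjoint_eqI) (simp add: op_scale_def cinner_scaleC_left cinner_scaleC_right cadjoint_char[OF T])

lemma op_Re_BH:
  fixes A :: "'a::chilbert_space \<Rightarrow> 'a"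
  shows "A \<in> BH \<Longrightarrow> op_Re A \<in> BH"
  using BH_scale[OF BH_addf[OF _ cadjoint_BH], of A A "1/2"]
  by (simp add: op_Re_def op_scale_def)

lemma op_Im_BH:
  fixes A :: "'a::chilbert_space \<Rightarrow> 'a"
  assumes A: "A \<in> BH" shows "op_Im A \<in> BH"
proof -
  have "(\<lambda>x. A x - cadjoint A x) = (\<lambda>x. A x + op_scale (-1) (cadjoint A) x)"
    by (simp add: op_scale_def scaleC_minus_left scaleC_one)
  then have "(\<lambda>x. A x - cadjoint A x) \<in> BH"
    using BH_addf[OF A BH_scale[OF cadjoint_BH[OF A]]] by metis
  from BH_scale[OF this, of "1 / (2 * \<i>)"] show ?thesis
    by (simp add: op_Im_def op_scale_def)
qed

lemma Im_as_Re:
  fixes T :: "'a::chilbert_space \<Rightarrow> 'a"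
  assumes T: "T \<in> BH"
  shows "op_Im (op_scale c T) = op_Re (op_scale (- \<i> * c) T)"
proof
  fix x
  define k :: complex where "k = 1 / (2 * \<i>)"
  have e1: "k * c = 1/2 * (- \<i> * c)" by (simp add: k_def field_simps)
  have e2: "1/2 * cnj (- \<i> * c) = - (k * cnj c)" by (simp add: k_def field_simps)
  have "op_Im (op_scale c T) x = scaleC k (scaleC c (T x) - scaleC (cnj c) (cadjoint T x))"
    unfolding op_Im_def cadjoint_scale[OF T] by (simp only: op_scale_def k_def)
  also have "\<dots> = scaleC (k * c) (T x) + scaleC (- (k * cnj c)) (cadjoint T x)"
    by (simp only: scaleC_diff_right scaleC_scaleC scaleC_minus_left diff_conv_add_uminus scaleC_add_right scaleC_minus_right)
  also have "\<dots> = scaleC (1/2) (scaleC (- \<i> * c) (T x) + scaleC (cnj (- \<i> * c)) (cadjoint T x))"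
    by (simp only: e1 e2[symmetric] scaleC_add_right scaleC_scaleC)
  also have "\<dots> = op_Re (op_scale (- \<i> * c) T) x"
    unfolding op_Re_def cadjoint_scale[OF T] by (simp only: op_scale_def)
  finally show "op_Im (op_scale c T) x = op_Re (op_scale (- \<i> * c) T) x" .
qed

lemma sc2: "scaleC a (scaleC b X + scaleC b Y) = scaleC (a * b) (X + (Y::'a::complex_vector))"
  by (simp add: scaleC_add_right scaleC_scaleC)

lemma sc2m: "scaleC a (scaleC b X - scaleC b Y) = scaleC (a * b) (X - (Y::'a::complex_vector))"
  by (simp add: scaleC_diff_right scaleC_scaleC)

lemma quarter2: "scaleC (1/4) (w + w) = scaleC (1/2) (w::'a::complex_vector)"
proof -
  have "scaleC (1/4) (w + w) = scaleC (1/4) w + scaleC (1/4) w" by (rule scaleC_add_right)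
  also have "\<dots> = scaleC (1/4 + 1/4) w" by (rule scaleC_add_left[symmetric])
  also have "(1/4 + 1/4 :: complex) = 1/2" by simp
  finally show ?thesis .
qed

lemma ReRe_ImIm:
  fixes A :: "'a::chilbert_space \<Rightarrow> 'a"
  assumes A: "A \<in> BH"
  shows "(\<lambda>x. op_Re A (op_Re A x) + op_Im A (op_Im A x))
       = op_scale (1/2) (\<lambda>x. A (cadjoint A x) + cadjoint A (A x))"
proof
  fix x
  define B where "B = cadjoint A"
  have B: "B \<in> BH" unfolding B_def by (rule cadjoint_BH[OF A])
  define p where "p = A (A x)"
  define q where "q = A (B x)"
  define r where "r = B (A x)"
  define s where "s = B (B x)"
  define k :: complex where "k = 1 / (2 * \<i>)"
  have RR: "op_Re A (op_Re A x) = scaleC (1/4) ((p + q) + (r + s))"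
    unfolding op_Re_def B_def[symmetric]
    by (simp add: BH_add_app[OF A] BH_add_app[OF B] BH_D(2)[OF A] BH_D(2)[OF B] sc2
        p_def q_def r_def s_def)
  have II: "op_Im A (op_Im A x) = scaleC (k * k) ((p - q) - (r - s))"
    unfolding op_Im_def B_def[symmetric] k_def[symmetric]
    by (simp add: BH_diff_app[OF A] BH_diff_app[OF B] BH_D(2)[OF A] BH_D(2)[OF B] sc2m
        p_def q_def r_def s_def)
  have kk: "k * k = - (1/4)" by (simp add: k_def field_simps)
  have "op_Re A (op_Re A x) + op_Im A (op_Im A x)
      = scaleC (1/4) (((p + q) + (r + s)) - ((p - q) - (r - s)))"
    unfolding RR II kk scaleC_minus_left scaleC_diff_right by simp
  also have "((p + q) + (r + s)) - ((p - q) - (r - s)) = (q + r) + (q + r)"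
    by (simp add: algebra_simps)
  also have "scaleC (1/4) ((q + r) + (q + r)) = scaleC (1/2) (q + r)"
    by (rule quarter2)
  finally show "op_Re A (op_Re A x) + op_Im A (op_Im A x)
      = op_scale (1/2) (\<lambda>x. A (cadjoint A x) + cadjoint A (A x)) x"
    by (simp add: op_scale_def q_def r_def B_def)
qed



lemma exp_shift: "exp (\<i> * complex_of_real (\<phi> - pi/2)) = - \<i> * exp (\<i> * complex_of_real \<phi>)"
proof -
  have "exp (\<i> * complex_of_real (\<phi> - pi/2)) = cis (\<phi> + -(pi/2))" by (simp add: cis_conv_exp)
  also have "\<dots> = cis \<phi> * cis (-(pi/2))" by (rule cis_mult[symmetric])
  also have "\<dots> = cis \<phi> * (- \<i>)" by (simp only: cis_minus_pi_half)
  also have "\<dots> = - \<i> * exp (\<i> * complex_of_real \<phi>)" by (simp add: cis_conv_exp mult.commute)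
  finally show ?thesis .
qed

lemma arith1: "(p::real) \<le> 2*(a+b) \<Longrightarrow> a \<le> W \<Longrightarrow> b \<le> W \<Longrightarrow> \<bar>a - b\<bar> \<le> 2*(W - p/4)"
  by (simp add: abs_le_iff)

lemma arith2: "(S::real) \<le> 2*(W - p/4) \<Longrightarrow> p/4 + 1/2*S \<le> W"
  by simp

lemma unit_cnj: "cmod c = 1 \<Longrightarrow> c * cnj c = 1"
  by (simp add: cnorm2)

theorem theorem2p3:
  fixes T :: "'a::chilbert_space \<Rightarrow> 'a" and N :: "('a \<Rightarrow> 'a) \<Rightarrow> real"
  assumes "T \<in> BH" and "algebra_norm N"
  shows "N (\<lambda>x. T (cadjoint T x) + cadjoint T (T x)) / 4
          + 1/2 * (SUP \<phi>::real.
               \<bar>(N (op_Re (op_scale (exp (\<i> * complex_of_real \<phi>)) T)))\<^sup>2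
                - (N (op_Im (op_scale (exp (\<i> * complex_of_real \<phi>)) T)))\<^sup>2\<bar>)
         \<le> (gen_numrad N T)\<^sup>2"
proof -
  have T: "T \<in> BH" by fact
  have Ts: "cadjoint T \<in> BH" by (rule cadjoint_BH[OF T])
  note an = assms(2)[unfolded algebra_norm_def]
  have Nnn: "\<And>S. S \<in> BH \<Longrightarrow> 0 \<le> N S" using an by blast
  have Nsc: "\<And>S c. S \<in> BH \<Longrightarrow> N (op_scale c S) = cmod c * N S" using an by blast
  have Ntri: "\<And>S U. S \<in> BH \<Longrightarrow> U \<in> BH \<Longrightarrow> N (\<lambda>x. S x + U x) \<le> N S + N U" using an by blast
  have Nmul: "\<And>S U. S \<in> BH \<Longrightarrow> U \<in> BH \<Longrightarrow> N (S \<circ> U) \<le> N S * N U" using an by blast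
  define c where "c = (\<lambda>\<phi>::real. exp (\<i> * complex_of_real \<phi>))"
  define R where "R = (\<lambda>\<phi>. op_Re (op_scale (c \<phi>) T))"
  define I where "I = (\<lambda>\<phi>. op_Im (op_scale (c \<phi>) T))"
  define P where "P = (\<lambda>x. T (cadjoint T x) + cadjoint T (T x))"
  define w where "w = gen_numrad N T"
  have cn: "cmod (c \<phi>) = 1" for \<phi> by (simp add: c_def)
  have ccnj: "c \<phi> * cnj (c \<phi>) = 1" for \<phi> by (rule unit_cnj[OF cn])
  have RBH: "R \<phi> \<in> BH" for \<phi> unfolding R_def by (rule op_Re_BH[OF BH_scale[OF T]])
  have IBH: "I \<phi> \<in> BH" for \<phi> unfolding I_def by (rule op_Im_BH[OF BH_scale[OF T]])
  have PBH: "P \<in> BH" unfolding P_def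
    using BH_addf[OF BH_comp[OF T Ts] BH_comp[OF Ts T]] by (simp add: o_def)
  have Rbound: "N (R \<theta>) \<le> (N T + N (cadjoint T)) / 2" for \<theta>
  proof -
    have eq: "R \<theta> = op_scale (1/2) (\<lambda>x. op_scale (c \<theta>) T x + op_scale (cnj (c \<theta>)) (cadjoint T) x)"
      unfolding R_def op_Re_def cadjoint_scale[OF T] by (simp only: op_scale_def)
    have "N (R \<theta>) = 1/2 * N (\<lambda>x. op_scale (c \<theta>) T x + op_scale (cnj (c \<theta>)) (cadjoint T) x)"
      unfolding eq by (subst Nsc) (auto intro!: BH_addf BH_scale T Ts)
    also have "\<dots> \<le> 1/2 * (N (op_scale (c \<theta>) T) + N (op_scale (cnj (c \<theta>)) (cadjoint T)))"
      by (intro mult_left_mono Ntri BH_scale T Ts) simp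
    also have "\<dots> = (N T + N (cadjoint T)) / 2"
      by (simp add: Nsc T Ts cn)
    finally show ?thesis .
  qed
  have bdd: "bdd_above (range (\<lambda>\<theta>. N (R \<theta>)))"
    using Rbound by (intro bdd_aboveI[where M="(N T + N (cadjoint T)) / 2"]) auto
  have w_eq: "w = (SUP \<theta>. N (R \<theta>))" unfolding w_def gen_numrad_def R_def c_def ..
  have Rw: "N (R \<phi>) \<le> w" for \<phi> unfolding w_eq by (rule cSUP_upper[OF _ bdd]) simp
  have IR: "I \<phi> = R (\<phi> - pi/2)" for \<phi>
    unfolding I_def R_def Im_as_Re[OF T] c_def exp_shift ..
  have Iw: "N (I \<phi>) \<le> w" for \<phi> unfolding IR by (rule Rw)
  have key: "N P \<le> 2 * ((N (R \<phi>))^2 + (N (I \<phi>))^2)" for \<phi>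
  proof -
    define A where "A = op_scale (c \<phi>) T"
    have A: "A \<in> BH" unfolding A_def by (rule BH_scale[OF T])
    have As: "cadjoint A = op_scale (cnj (c \<phi>)) (cadjoint T)" unfolding A_def by (rule cadjoint_scale[OF T])
    have AP: "(\<lambda>x. A (cadjoint A x) + cadjoint A (A x)) = P"
    proof
      fix x
      have 1: "A (cadjoint A x) = T (cadjoint T x)"
        unfolding As unfolding A_def op_scale_def BH_D(2)[OF T] scaleC_scaleC ccnj scaleC_one ..
      have 2: "cadjoint A (A x) = cadjoint T (T x)"
        unfolding As unfolding A_def op_scale_def BH_D(2)[OF Ts] scaleC_scaleC mult.commute[of "cnj (c \<phi>)"] ccnj scaleC_one ..
      show "A (cadjoint A x) + cadjoint A (A x) = P x" unfolding 1 2 P_def ..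
    qed
    have eq: "(\<lambda>x. R \<phi> (R \<phi> x) + I \<phi> (I \<phi> x)) = op_scale (1/2) P"
      using ReRe_ImIm[OF A] unfolding AP unfolding R_def I_def A_def .
    have "N P / 2 = N (\<lambda>x. R \<phi> (R \<phi> x) + I \<phi> (I \<phi> x))"
      unfolding eq by (simp add: Nsc PBH)
    also have "\<dots> = N (\<lambda>x. (R \<phi> \<circ> R \<phi>) x + (I \<phi> \<circ> I \<phi>) x)" by (simp add: o_def)
    also have "\<dots> \<le> N (R \<phi> \<circ> R \<phi>) + N (I \<phi> \<circ> I \<phi>)"
      by (intro Ntri BH_comp RBH IBH)
    also have "\<dots> \<le> N (R \<phi>) * N (R \<phi>) + N (I \<phi>) * N (I \<phi>)"
      by (intro add_mono Nmul RBH IBH)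
    finally show ?thesis by (simp add: power2_eq_square)
  qed
  have pt: "\<bar>(N (R \<phi>))\<^sup>2 - (N (I \<phi>))\<^sup>2\<bar> \<le> 2 * (w^2 - N P / 4)" for \<phi>
  proof -
    have a0: "0 \<le> N (R \<phi>)" by (rule Nnn[OF RBH])
    have b0: "0 \<le> N (I \<phi>)" by (rule Nnn[OF IBH])
    have aw: "(N (R \<phi>))^2 \<le> w^2" by (rule power_mono[OF Rw a0])
    have bw: "(N (I \<phi>))^2 \<le> w^2" by (rule power_mono[OF Iw b0])
    show ?thesis using key[of \<phi>] aw bw by (rule arith1)
  qed
  have "(SUP \<phi>. \<bar>(N (R \<phi>))\<^sup>2 - (N (I \<phi>))\<^sup>2\<bar>) \<le> 2 * (w^2 - N P / 4)"
    by (intro cSUP_least pt) auto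
  then have "N P / 4 + 1/2 * (SUP \<phi>. \<bar>(N (R \<phi>))\<^sup>2 - (N (I \<phi>))\<^sup>2\<bar>) \<le> w^2" by (rule arith2)
  then show ?thesis unfolding P_def w_def R_def I_def c_def .
qed


end
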